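(* Let $I\subset\mathbb{R}$ be an interval, $a,b\in I$ with $a<b$, and let $f:I\to\mathbb{R}$ be absolutely continuous on the interior $I^{\circ}$ of $I$ with $f''\in L[a,b]$. Let $q\ge 1$. If $|f''|^q$ belongs to the class $Q(I)$, then \begin{align*} &\left|\frac{1}{b-a}\int_a^b f(x)\,dx-\frac{1}{6}\left[f(a)+4f\left(\frac{a+b}{2}\right)+f(b)\right]\right|\\ &\le \frac{(b-a)^2}{6}\left(\frac{1}{27}\right)^{1-\frac1q}\Bigg\{\left[\left(6\ln 2-4\ln 3+\frac{7}{24}\right)|f''(a)|^q+\frac{5|f''(b)|^q}{24}\right]^{\frac1q}\\ &\qquad+\left[\left(6\ln 2-4\ln 3+\frac{7}{24}\right)|f''(b)|^q+\frac{5|f''(a)|^q}{24}\right]^{\frac1q}\Bigg\}. \end{align*}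
   Context: A function $g:I\to\mathbb{R}$ belongs to the class $Q(I)$ (is a Godunova–Levin function) if $g$ is non-negative and for all $x,y\in I$ and $t\in(0,1)$, \[ g(tx+(1-t)y)\le \frac{g(x)}{t}+\frac{g(y)}{1-t}. \] *)

theory Defs
  imports "HOL-Analysis.Analysis"
begin

definition GL_class :: "real set \<Rightarrow> (real \<Rightarrow> real) \<Rightarrow> bool" where
  "GL_class I g \<longleftrightarrow> (\<forall>x\<in>I. 0 \<le> g x) \<and>
     (\<forall>x\<in>I. \<forall>y\<in>I. \<forall>t::real. 0 < t \<and> t < 1 \<longrightarrow>
        g (t * x + (1 - t) * y) \<le> g x / t + g y / (1 - t))"

end

theory Submission imports Defs begin


lemma young_pt:
  fixes q u \<alpha> :: real
  assumes q: "q \<ge> 1" and u: "u \<ge> 0" and al: "\<alpha> > 0"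
  shows "u \<le> (1 - 1/q) * \<alpha> + (1/q) * (\<alpha> powr (1 - q) * u powr q)"
proof (cases "u = 0")
  case True then show ?thesis using q al by (simp add: field_simps)
next
  case False
  hence up: "u > 0" using u by simp
  define Y where "Y = \<alpha> powr (1 - q) * u powr q"
  have Yp: "Y > 0" using up al by (simp add: Y_def)
  have "Y powr (1/q) = \<alpha> powr ((1 - q)/q) * u"
    using up al q by (simp add: Y_def powr_mult powr_powr)
  hence "\<alpha> powr (1 - 1/q) * Y powr (1/q) = \<alpha> powr ((1 - 1/q) + (1-q)/q) * u"
    by (simp add: powr_add)
  also have "(1 - 1/q) + (1-q)/q = 0" using q by (simp add: field_simps)
  finally have eq: "\<alpha> powr (1 - 1/q) * Y powr (1/q) = u" using al by simp
  have "\<alpha> powr (1 - 1/q) * Y powr (1/q) \<le> (1 - 1/q) * \<alpha> + (1/q) * Y"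
    using q al Yp by (intro Youngs_inequality_0) (auto simp: field_simps)
  then show ?thesis using eq by (simp add: Y_def)
qed

lemma young_opt:
  fixes q W M J :: real
  assumes q: "q \<ge> 1" and W: "W > 0" and M: "M \<ge> 0"
    and H: "\<And>\<alpha>. \<alpha> > 0 \<Longrightarrow> J \<le> (1 - 1/q) * \<alpha> * W + (1/q) * (\<alpha> powr (1 - q) * M)"
  shows "J \<le> W powr (1 - 1/q) * M powr (1/q)"
proof (cases "M = 0")
  case True
  show ?thesis
  proof (rule ccontr)
    assume "\<not> ?thesis"
    hence Jp: "J > 0" using True q by simp
    have qq: "0 \<le> 1 - 1/q" "1 - 1/q \<le> 1" using q by (auto simp: field_simps)
    define \<alpha> where "\<alpha> = J / (2 * W)"
    have ap: "\<alpha> > 0" using Jp W by (simp add: \<alpha>_def)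
    have "J \<le> (1 - 1/q) * \<alpha> * W" using H[OF ap] True by simp
    also have "\<dots> \<le> \<alpha> * W" using qq ap W by (simp add: mult_left_le_one_le)
    also have "\<dots> = J/2" using W by (simp add: \<alpha>_def)
    finally show False using Jp by simp
  qed
next
  case False
  hence Mp: "M > 0" using M by simp
  define \<alpha> where "\<alpha> = (M / W) powr (1/q)"
  have ap: "\<alpha> > 0" using Mp W by (simp add: \<alpha>_def)
  have Wd: "W powr (1 - 1/q) = W / W powr (1/q)" using W by (simp add: powr_diff)
  have Wd2: "W powr (1/q - 1) = W powr (1/q) / W" using W by (simp add: powr_diff)
  have Md2: "M powr (1/q - 1) = M powr (1/q) / M" using Mp by (simp add: powr_diff)
  have e1: "\<alpha> * W = W powr (1 - 1/q) * M powr (1/q)"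
    using Mp W q by (simp add: \<alpha>_def powr_divide Wd)
  have "\<alpha> powr (1 - q) * M = (M/W) powr ((1/q) * (1 - q)) * M"
    by (simp add: \<alpha>_def powr_powr)
  also have "(1/q) * (1 - q) = 1/q - 1" using q by (simp add: field_simps)
  also have "(M/W) powr (1/q - 1) * M = W powr (1 - 1/q) * M powr (1/q)"
    using Mp W q by (simp add: powr_divide Wd Wd2 Md2)
  finally have e2: "\<alpha> powr (1 - q) * M = W powr (1 - 1/q) * M powr (1/q)" .
  have "J \<le> (1 - 1/q) * \<alpha> * W + (1/q) * (\<alpha> powr (1 - q) * M)" using H[OF ap] .
  also have "\<dots> = W powr (1 - 1/q) * M powr (1/q)"
    using e1 e2 q by (simp add: field_simps)
  finally show ?thesis .
qed

lemma half_bound: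
  fixes \<phi> w G F :: "real \<Rightarrow> real"
  assumes q: "q \<ge> 1"
    and hJ: "(\<phi> has_integral J) {u..v}" and hW: "(w has_integral W) {u..v}"
    and hM: "(G has_integral M) {u..v}" and W: "W > 0"
    and p1: "\<And>x. x \<in> {u..v} \<Longrightarrow> \<bar>\<phi> x\<bar> \<le> w x * \<bar>F x\<bar>"
    and p2: "\<And>x. x \<in> {u..v} \<Longrightarrow> 0 \<le> w x"
    and p3: "\<And>x. x \<in> {u..v} \<Longrightarrow> w x * \<bar>F x\<bar> powr q \<le> G x"
  shows "\<bar>J\<bar> \<le> W powr (1 - 1/q) * M powr (1/q)"
proof (rule young_opt[OF q W])
  show "M \<ge> 0"
    using hM by (rule has_integral_nonneg) (meson order_trans p2 p3 mult_nonneg_nonneg powr_ge_zero)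
next
  fix \<alpha> :: real assume ap: "\<alpha> > 0"
  define R where "R x = (1 - 1/q) * \<alpha> * w x + (1/q) * (\<alpha> powr (1 - q) * G x)" for x
  have hR: "(R has_integral ((1 - 1/q) * \<alpha> * W + (1/q) * (\<alpha> powr (1 - q) * M))) {u..v}"
    unfolding R_def
    by (intro has_integral_add has_integral_mult_right hW hM)
  have pt: "\<bar>\<phi> x\<bar> \<le> R x" if x: "x \<in> {u..v}" for x
  proof -
    have "\<bar>\<phi> x\<bar> \<le> w x * \<bar>F x\<bar>" using p1[OF x] .
    also have "\<dots> \<le> w x * ((1 - 1/q) * \<alpha> + (1/q) * (\<alpha> powr (1 - q) * \<bar>F x\<bar> powr q))"
      using young_pt[OF q _ ap, of "\<bar>F x\<bar>"] p2[OF x] by (intro mult_left_mono) auto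
    also have "\<dots> = (1 - 1/q) * \<alpha> * w x + (1/q) * (\<alpha> powr (1 - q) * (w x * \<bar>F x\<bar> powr q))"
      by (simp add: algebra_simps)
    also have "\<dots> \<le> R x" unfolding R_def
      using p3[OF x] q ap by (intro add_left_mono mult_left_mono) auto
    finally show ?thesis .
  qed
  have "J \<le> (1 - 1/q) * \<alpha> * W + (1/q) * (\<alpha> powr (1 - q) * M)"
    using has_integral_le[OF hJ hR] pt by (meson abs_ge_self order_trans)
  moreover have "- J \<le> (1 - 1/q) * \<alpha> * W + (1/q) * (\<alpha> powr (1 - q) * M)"
    using has_integral_le[OF has_integral_neg[OF hJ] hR] pt by (meson abs_ge_minus_self order_trans)
  ultimately show "\<bar>J\<bar> \<le> (1 - 1/q) * \<alpha> * W + (1/q) * (\<alpha> powr (1 - q) * M)" by simp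
qed


lemma ftc_piece:
  fixes F g :: "real \<Rightarrow> real"
  assumes "u \<le> v" "\<And>x. x \<in> {u..v} \<Longrightarrow> (F has_real_derivative g x) (at x)"
  shows "(g has_integral F v - F u) {u..v}"
  by (rule fundamental_theorem_of_calculus[OF assms(1)])
     (use assms(2) in \<open>auto simp: has_real_derivative_iff_has_vector_derivative[symmetric] intro: has_field_derivative_at_within\<close>)

lemma two_piece:
  fixes F g :: "real \<Rightarrow> real"
  assumes "u \<le> c" "c \<le> v"
    "\<And>x. x \<in> {u..c} \<Longrightarrow> (F has_real_derivative g x) (at x)"
    "\<And>x. x \<in> {c..v} \<Longrightarrow> ((\<lambda>x. - F x) has_real_derivative g x) (at x)"
    "2 * F c - F u - F v = V"
  shows "(g has_integral V) {u..v}"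
proof -
  have "(g has_integral (F c - F u) + ((- F v) - (- F c))) {u..v}"
    by (rule has_integral_combine[OF assms(1,2) ftc_piece ftc_piece]) (use assms in auto)
  moreover have "(F c - F u) + ((- F v) - (- F c)) = V" using assms(5) by simp
  ultimately show ?thesis by simp
qed

lemma ln_facts:
  fixes a b h :: real assumes h: "h > 0" and b: "b = a + h"
  shows "ln (b - (a+h/3)) = ln 2 + ln h - ln 3" "ln (b - (a+b)/2) = ln h - ln 2" "ln (b - a) = ln h"
    "ln ((b - h/3) - a) = ln 2 + ln h - ln 3" "ln ((a+b)/2 - a) = ln h - ln 2"
proof -
  have e1: "b - (a+h/3) = (2*h)/3" "(b - h/3) - a = (2*h)/3" using b by auto
  have e2: "b - (a+b)/2 = h/2" "(a+b)/2 - a = h/2" using b by (simp_all add: field_simps)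
  have l1: "ln ((2*h)/3) = ln 2 + ln h - ln 3" using h by (simp add: ln_div ln_mult)
  have l2: "ln (h/2) = ln h - ln 2" using h by (simp add: ln_div)
  show "ln (b - (a+h/3)) = ln 2 + ln h - ln 3" "ln (b - (a+b)/2) = ln h - ln 2" "ln (b - a) = ln h"
    "ln ((b - h/3) - a) = ln 2 + ln h - ln 3" "ln ((a+b)/2 - a) = ln h - ln 2"
    using e1 e2 l1 l2 b by (simp_all only: e1 e2 l1 l2, simp)
qed

lemma int_W1:
  fixes a b h :: real assumes h: "h > 0" and b: "b = a + h"
  shows "((\<lambda>x. (x-a)*\<bar>3*(x-a)-h\<bar>/6) has_integral h^3/162) {a..(a+b)/2}"
proof -
  define F where "F x = (h*(x-a)^2/2 - (x-a)^3)/6" for x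
  show ?thesis
  proof (rule two_piece[where F=F and c="a+h/3"])
    fix x assume x: "x \<in> {a..a+h/3}"
    have ab: "\<bar>3*(x-a)-h\<bar> = -(3*(x-a)-h)" using x h b by (subst abs_of_nonpos) auto
    have pos: "x - a > 0 \<or> x = a" "b - x > 0 \<or> x = b" "x - a \<ge> 0" "b - x \<ge> 0" using x h b by auto
    show "(F has_real_derivative (x-a)*\<bar>3*(x-a)-h\<bar>/6) (at x)" unfolding ab F_def
      using x h b by (auto intro!: derivative_eq_intros simp: field_simps power2_eq_square)
  next
    fix x assume x: "x \<in> {a+h/3..(a+b)/2}"
    have ab: "\<bar>3*(x-a)-h\<bar> = (3*(x-a)-h)" using x h b by (subst abs_of_nonneg) auto
    show "((\<lambda>x. - F x) has_real_derivative (x-a)*\<bar>3*(x-a)-h\<bar>/6) (at x)" unfolding ab F_def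
      using x h b by (auto intro!: derivative_eq_intros simp: field_simps power2_eq_square)
  next
    show "2 * F (a+h/3) - F (a) - F ((a+b)/2) = h^3/162"
      unfolding F_def by (simp add: b field_simps power3_eq_cube power2_eq_square)
  qed (use h b in auto)
qed

lemma int_D1:
  fixes a b h :: real assumes h: "h > 0" and b: "b = a + h"
  shows "((\<lambda>x. h*\<bar>3*(x-a)-h\<bar>/6) has_integral 5*h^3/144) {a..(a+b)/2}"
proof -
  define F where "F x = h*(h*(x-a) - 3*(x-a)^2/2)/6" for x
  show ?thesis
  proof (rule two_piece[where F=F and c="a+h/3"])
    fix x assume x: "x \<in> {a..a+h/3}"
    have ab: "\<bar>3*(x-a)-h\<bar> = -(3*(x-a)-h)" using x h b by (subst abs_of_nonpos) auto
    have pos: "x - a > 0 \<or> x = a" "b - x > 0 \<or> x = b" "x - a \<ge> 0" "b - x \<ge> 0" using x h b by auto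
    show "(F has_real_derivative h*\<bar>3*(x-a)-h\<bar>/6) (at x)" unfolding ab F_def
      using x h b by (auto intro!: derivative_eq_intros simp: field_simps power2_eq_square)
  next
    fix x assume x: "x \<in> {a+h/3..(a+b)/2}"
    have ab: "\<bar>3*(x-a)-h\<bar> = (3*(x-a)-h)" using x h b by (subst abs_of_nonneg) auto
    show "((\<lambda>x. - F x) has_real_derivative h*\<bar>3*(x-a)-h\<bar>/6) (at x)" unfolding ab F_def
      using x h b by (auto intro!: derivative_eq_intros simp: field_simps power2_eq_square)
  next
    show "2 * F (a+h/3) - F (a) - F ((a+b)/2) = 5*h^3/144"
      unfolding F_def by (simp add: b field_simps power3_eq_cube power2_eq_square)
  qed (use h b in auto)
qed

lemma int_C1:
  fixes a b h :: real assumes h: "h > 0" and b: "b = a + h"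
  shows "((\<lambda>x. (x-a)*\<bar>3*(x-a)-h\<bar>/6 * h/(b-x)) has_integral h^3*(6 * ln 2 - 4 * ln 3 + 7/24)/6) {a..(a+b)/2}"
proof -
  define F where "F x = h/6*(3*(x-a)^2/2 + 2*h*(x-a) + 2*h^2*ln(b-x))" for x
  show ?thesis
  proof (rule two_piece[where F=F and c="a+h/3"])
    fix x assume x: "x \<in> {a..a+h/3}"
    have ab: "\<bar>3*(x-a)-h\<bar> = -(3*(x-a)-h)" using x h b by (subst abs_of_nonpos) auto
    have pos: "x - a > 0 \<or> x = a" "b - x > 0 \<or> x = b" "x - a \<ge> 0" "b - x \<ge> 0" using x h b by auto
    show "(F has_real_derivative (x-a)*\<bar>3*(x-a)-h\<bar>/6 * h/(b-x)) (at x)" unfolding ab F_def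
      using x h b by (auto intro!: derivative_eq_intros simp: field_simps power2_eq_square)
  next
    fix x assume x: "x \<in> {a+h/3..(a+b)/2}"
    have ab: "\<bar>3*(x-a)-h\<bar> = (3*(x-a)-h)" using x h b by (subst abs_of_nonneg) auto
    show "((\<lambda>x. - F x) has_real_derivative (x-a)*\<bar>3*(x-a)-h\<bar>/6 * h/(b-x)) (at x)" unfolding ab F_def
      using x h b by (auto intro!: derivative_eq_intros simp: field_simps power2_eq_square)
  next
    show "2 * F (a+h/3) - F (a) - F ((a+b)/2) = h^3*(6 * ln 2 - 4 * ln 3 + 7/24)/6"
      unfolding F_def ln_facts[OF h b] by (simp add: b field_simps power3_eq_cube power2_eq_square ln_facts[OF h b])
  qed (use h b in auto)
qed

lemma int_W2:
  fixes a b h :: real assumes h: "h > 0" and b: "b = a + h"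
  shows "((\<lambda>x. (b-x)*\<bar>3*(b-x)-h\<bar>/6) has_integral h^3/162) {(a+b)/2..b}"
proof -
  define F where "F x = -((b-x)^3 - h*(b-x)^2/2)/6" for x
  show ?thesis
  proof (rule two_piece[where F=F and c="b-h/3"])
    fix x assume x: "x \<in> {(a+b)/2..b-h/3}"
    have ab: "\<bar>3*(b-x)-h\<bar> = (3*(b-x)-h)" using x h b by (subst abs_of_nonneg) auto
    have pos: "x - a > 0 \<or> x = a" "b - x > 0 \<or> x = b" "x - a \<ge> 0" "b - x \<ge> 0" using x h b by auto
    show "(F has_real_derivative (b-x)*\<bar>3*(b-x)-h\<bar>/6) (at x)" unfolding ab F_def
      using x h b by (auto intro!: derivative_eq_intros simp: field_simps power2_eq_square)
  next
    fix x assume x: "x \<in> {b-h/3..b}"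
    have ab: "\<bar>3*(b-x)-h\<bar> = -(3*(b-x)-h)" using x h b by (subst abs_of_nonpos) auto
    show "((\<lambda>x. - F x) has_real_derivative (b-x)*\<bar>3*(b-x)-h\<bar>/6) (at x)" unfolding ab F_def
      using x h b by (auto intro!: derivative_eq_intros simp: field_simps power2_eq_square)
  next
    show "2 * F (b-h/3) - F ((a+b)/2) - F (b) = h^3/162"
      unfolding F_def by (simp add: b field_simps power3_eq_cube power2_eq_square)
  qed (use h b in auto)
qed

lemma int_D2:
  fixes a b h :: real assumes h: "h > 0" and b: "b = a + h"
  shows "((\<lambda>x. h*\<bar>3*(b-x)-h\<bar>/6) has_integral 5*h^3/144) {(a+b)/2..b}"
proof -
  define F where "F x = h*(h*(b-x) - 3*(b-x)^2/2)/6" for x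
  show ?thesis
  proof (rule two_piece[where F=F and c="b-h/3"])
    fix x assume x: "x \<in> {(a+b)/2..b-h/3}"
    have ab: "\<bar>3*(b-x)-h\<bar> = (3*(b-x)-h)" using x h b by (subst abs_of_nonneg) auto
    have pos: "x - a > 0 \<or> x = a" "b - x > 0 \<or> x = b" "x - a \<ge> 0" "b - x \<ge> 0" using x h b by auto
    show "(F has_real_derivative h*\<bar>3*(b-x)-h\<bar>/6) (at x)" unfolding ab F_def
      using x h b by (auto intro!: derivative_eq_intros simp: field_simps power2_eq_square)
  next
    fix x assume x: "x \<in> {b-h/3..b}"
    have ab: "\<bar>3*(b-x)-h\<bar> = -(3*(b-x)-h)" using x h b by (subst abs_of_nonpos) auto
    show "((\<lambda>x. - F x) has_real_derivative h*\<bar>3*(b-x)-h\<bar>/6) (at x)" unfolding ab F_def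
      using x h b by (auto intro!: derivative_eq_intros simp: field_simps power2_eq_square)
  next
    show "2 * F (b-h/3) - F ((a+b)/2) - F (b) = 5*h^3/144"
      unfolding F_def by (simp add: b field_simps power3_eq_cube power2_eq_square)
  qed (use h b in auto)
qed

lemma int_C2:
  fixes a b h :: real assumes h: "h > 0" and b: "b = a + h"
  shows "((\<lambda>x. (b-x)*\<bar>3*(b-x)-h\<bar>/6 * h/(x-a)) has_integral h^3*(6 * ln 2 - 4 * ln 3 + 7/24)/6) {(a+b)/2..b}"
proof -
  define F where "F x = h/6*(3*(b-x)^2/2 + 2*h*(b-x) + 2*h^2*ln(x-a))" for x
  show ?thesis
  proof (rule two_piece[where F=F and c="b-h/3"])
    fix x assume x: "x \<in> {(a+b)/2..b-h/3}"
    have ab: "\<bar>3*(b-x)-h\<bar> = (3*(b-x)-h)" using x h b by (subst abs_of_nonneg) auto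
    have pos: "x - a > 0 \<or> x = a" "b - x > 0 \<or> x = b" "x - a \<ge> 0" "b - x \<ge> 0" using x h b by auto
    show "(F has_real_derivative (b-x)*\<bar>3*(b-x)-h\<bar>/6 * h/(x-a)) (at x)" unfolding ab F_def
      using x h b by (auto intro!: derivative_eq_intros simp: field_simps power2_eq_square)
  next
    fix x assume x: "x \<in> {b-h/3..b}"
    have ab: "\<bar>3*(b-x)-h\<bar> = -(3*(b-x)-h)" using x h b by (subst abs_of_nonpos) auto
    show "((\<lambda>x. - F x) has_real_derivative (b-x)*\<bar>3*(b-x)-h\<bar>/6 * h/(x-a)) (at x)" unfolding ab F_def
      using x h b by (auto intro!: derivative_eq_intros simp: field_simps power2_eq_square)
  next
    show "2 * F (b-h/3) - F ((a+b)/2) - F (b) = h^3*(6 * ln 2 - 4 * ln 3 + 7/24)/6"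
      unfolding F_def ln_facts[OF h b] by (simp add: b field_simps power3_eq_cube power2_eq_square ln_facts[OF h b])
  qed (use h b in auto)
qed


lemma GL_pt:
  assumes gl: "GL_class I g" and aI: "a \<in> I" and bI: "b \<in> I" and x: "a < x" "x < b"
  shows "g x \<le> g a * (b-a)/(b-x) + g b * (b-a)/(x-a)"
proof -
  define t where "t = (b-x)/(b-a)"
  have t: "0 < t" "t < 1" using x by (auto simp: t_def field_simps)
  have "g (t*a + (1-t)*b) \<le> g a / t + g b / (1-t)"
    using gl aI bI t unfolding GL_class_def by blast
  moreover have "t*a + (1-t)*b = x"
  proof -
    have "t*(b-a) = b-x" using x by (simp add: t_def)
    then show ?thesis by (simp add: algebra_simps)
  qed
  moreover have "1 - t = (x-a)/(b-a)" using x by (simp add: t_def field_simps)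
  ultimately show ?thesis by (simp add: t_def)
qed

lemma GL_nonneg: "GL_class I g \<Longrightarrow> x \<in> I \<Longrightarrow> 0 \<le> g x"
  unfolding GL_class_def by blast

lemma rescale:
  fixes k X q :: real assumes k: "k > 0" and X: "X \<ge> 0"
  shows "(k/27) powr (1-1/q) * (k*X) powr (1/q) = k * ((1/27) powr (1-1/q) * X powr (1/q))"
proof -
  have "(k/27) powr (1-1/q) * (k*X) powr (1/q) = (k powr (1-1/q) * k powr (1/q)) * ((1/27) powr (1-1/q) * X powr (1/q))"
    using k X by (simp add: powr_mult powr_divide)
  also have "k powr (1-1/q) * k powr (1/q) = k" using k by (simp add: powr_add[symmetric])
  finally show ?thesis .
qed

lemma deriv_H1:
  fixes f f' f'' :: "real \<Rightarrow> real"
  assumes d1: "(f has_real_derivative f' x) (at x)" and d2: "(f' has_real_derivative f'' x) (at x)"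
  shows "((\<lambda>x. (x-a)*(3*(x-a)-h)/6 * f' x - ((x-a) - h/6) * f x) has_real_derivative (x-a)*(3*(x-a)-h)/6 * f'' x - f x) (at x)"
  apply (auto intro!: derivative_eq_intros d1 d2)
  apply (simp add: field_simps)
  done

lemma deriv_H2:
  fixes f f' f'' :: "real \<Rightarrow> real"
  assumes d1: "(f has_real_derivative f' x) (at x)" and d2: "(f' has_real_derivative f'' x) (at x)"
  shows "((\<lambda>x. (b-x)*(3*(b-x)-h)/6 * f' x - (h/6 - (b-x)) * f x) has_real_derivative (b-x)*(3*(b-x)-h)/6 * f'' x - f x) (at x)"
  apply (auto intro!: derivative_eq_intros d1 d2)
  apply (simp add: field_simps)
  done

lemma hval1:
  fixes f g :: "real \<Rightarrow> real" assumes h: "(h::real) > 0" and b: "b = a + h"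
  shows "((a+b)/2-a)*(3*((a+b)/2-a)-h)/6 * g ((a+b)/2) - (((a+b)/2-a) - h/6) * f ((a+b)/2)
       - ((a-a)*(3*(a-a)-h)/6 * g a - ((a-a) - h/6) * f a) = h^2/24 * g ((a+b)/2) - h/3 * f ((a+b)/2) - h/6 * f a"
  using b by (simp add: field_simps power2_eq_square)

lemma hval2:
  fixes f g :: "real \<Rightarrow> real" assumes h: "(h::real) > 0" and b: "b = a + h"
  shows "(b-b)*(3*(b-b)-h)/6 * g b - (h/6 - (b-b)) * f b
       - ((b-(a+b)/2)*(3*(b-(a+b)/2)-h)/6 * g ((a+b)/2) - (h/6 - (b-(a+b)/2)) * f ((a+b)/2)) = -(h^2)/24 * g ((a+b)/2) - h/3 * f ((a+b)/2) - h/6 * f b"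
  using b by (simp add: field_simps power2_eq_square)

lemma hval3:
  fixes f g :: "real \<Rightarrow> real" assumes h: "(h::real) > 0" and b: "b = a + h"
  shows "(1 / (b - a)) * (I1 + I2) - (1/6) * (f a + 4 * f ((a + b) / 2) + f b) = 
   ((h^2/24 * g ((a+b)/2) - h/3 * f ((a+b)/2) - h/6 * f a + I1) + (-(h^2)/24 * g ((a+b)/2) - h/3 * f ((a+b)/2) - h/6 * f b + I2)) / h"
  using b h by (simp add: field_simps power2_eq_square)

lemma dist_aux: "(w::real) * (A*h/u + B*h/v) = A*(w*h/u) + B*(w*h/v)"
  by (simp add: algebra_simps)

lemma cancel_aux: assumes "(v::real) \<noteq> 0" shows "v * tt / 6 * h / v = h * tt / 6"
  using assms by simp


theorem theorem2:
  fixes f f' f'' :: "real \<Rightarrow> real" and I :: "real set" and a b q :: real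
  assumes "is_interval I" and "a \<in> I" and "b \<in> I" and "a < b"
    and "continuous_on I f" and "continuous_on I f'"
    and "\<And>x. x \<in> interior I \<Longrightarrow> (f has_real_derivative f' x) (at x)"
    and "\<And>x. x \<in> interior I \<Longrightarrow> (f' has_real_derivative f'' x) (at x)"
    and "f'' absolutely_integrable_on {a..b}"
    and "q \<ge> 1"
    and "GL_class I (\<lambda>x. \<bar>f'' x\<bar> powr q)"
  shows "\<bar>(1 / (b - a)) * integral {a..b} f - (1/6) * (f a + 4 * f ((a + b) / 2) + f b)\<bar>
    \<le> (b - a)^2 / 6 * (1/27) powr (1 - 1/q) *
       ( ((6 * ln 2 - 4 * ln 3 + 7/24) * \<bar>f'' a\<bar> powr q + 5 * \<bar>f'' b\<bar> powr q / 24) powr (1/q)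
       + ((6 * ln 2 - 4 * ln 3 + 7/24) * \<bar>f'' b\<bar> powr q + 5 * \<bar>f'' a\<bar> powr q / 24) powr (1/q))"
proof -
  note intI = assms(1) and aI = assms(2) and bI = assms(3) and ab = assms(4)
    and cf = assms(5) and cf' = assms(6) and df = assms(7) and df' = assms(8)
    and q = assms(10) and gl = assms(11)
  define h where "h = b - a"
  have h: "h > 0" using ab by (simp add: h_def)
  have bh: "b = a + h" by (simp add: h_def)
  define m where "m = (a+b)/2"
  have am: "a < m" "m < b" using ab by (auto simp: m_def)
  have sub: "{a..b} \<subseteq> I" using mem_is_interval_1_I[OF intI aI bI] by auto
  have subi: "{a<..<b} \<subseteq> interior I"
    using interior_mono[OF sub] by simp
  define c where "c = (6 * ln 2 - 4 * ln 3 + 7/24::real)"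
  define A where "A = \<bar>f'' a\<bar> powr q"
  define B where "B = \<bar>f'' b\<bar> powr q"
  have A0: "A \<ge> 0" and B0: "B \<ge> 0" by (simp_all add: A_def B_def)
  define P1 where "P1 x = (x-a)*(3*(x-a)-h)/6" for x
  define H1 where "H1 x = P1 x * f' x - ((x-a) - h/6) * f x" for x
  define P2 where "P2 x = (b-x)*(3*(b-x)-h)/6" for x
  define H2 where "H2 x = P2 x * f' x - (h/6 - (b-x)) * f x" for x
  have deriv: "(f has_real_derivative f' x) (at x)" "(f' has_real_derivative f'' x) (at x)"
    if "x \<in> {a<..<b}" for x using that subi df df' by auto
  have cont: "continuous_on {u..v} f" "continuous_on {u..v} f'" if "a \<le> u" "v \<le> b" for u v
  proof -
    have "{u..v} \<subseteq> I" using sub that by auto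
    then show "continuous_on {u..v} f" "continuous_on {u..v} f'"
      using continuous_on_subset[OF cf] continuous_on_subset[OF cf'] by auto
  qed
  have i1: "((\<lambda>x. P1 x * f'' x - f x) has_integral H1 m - H1 a) {a..m}"
  proof (rule fundamental_theorem_of_calculus_interior)
    show "continuous_on {a..m} H1" unfolding H1_def P1_def
      using cont[of a m] am by (auto intro!: continuous_intros)
    fix x assume x: "x \<in> {a<..<m}"
    hence xx: "x \<in> {a<..<b}" using am by auto
    have "(H1 has_real_derivative P1 x * f'' x - f x) (at x)"
      unfolding H1_def P1_def using deriv_H1[where f=f and f'=f' and f''=f'', OF deriv[OF xx]] by simp
    then show "(H1 has_vector_derivative P1 x * f'' x - f x) (at x)"
      by (simp add: has_real_derivative_iff_has_vector_derivative)
  qed (use am in auto)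
  have i2: "((\<lambda>x. P2 x * f'' x - f x) has_integral H2 b - H2 m) {m..b}"
  proof (rule fundamental_theorem_of_calculus_interior)
    show "continuous_on {m..b} H2" unfolding H2_def P2_def
      using cont[of m b] am by (auto intro!: continuous_intros)
    fix x assume x: "x \<in> {m<..<b}"
    hence xx: "x \<in> {a<..<b}" using am by auto
    have "(H2 has_real_derivative P2 x * f'' x - f x) (at x)"
      unfolding H2_def P2_def using deriv_H2[where f=f and f'=f' and f''=f'', OF deriv[OF xx]] by simp
    then show "(H2 has_vector_derivative P2 x * f'' x - f x) (at x)"
      by (simp add: has_real_derivative_iff_has_vector_derivative)
  qed (use am in auto)
  have fi1: "(f has_integral integral {a..m} f) {a..m}"
    using cont[of a m] am by (intro integrable_integral integrable_continuous_real) auto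
  have fi2: "(f has_integral integral {m..b} f) {m..b}"
    using cont[of m b] am by (intro integrable_integral integrable_continuous_real) auto
  define J1 where "J1 = H1 m - H1 a + integral {a..m} f"
  define J2 where "J2 = H2 b - H2 m + integral {m..b} f"
  have j1: "((\<lambda>x. P1 x * f'' x) has_integral J1) {a..m}"
    using has_integral_add[OF i1 fi1] unfolding J1_def by simp
  have j2: "((\<lambda>x. P2 x * f'' x) has_integral J2) {m..b}"
    using has_integral_add[OF i2 fi2] unfolding J2_def by simp
  have fint: "integral {a..b} f = integral {a..m} f + integral {m..b} f"
    using has_integral_combine[OF _ _ fi1 fi2] am by (simp add: integral_unique)
  have ident: "(1 / (b - a)) * integral {a..b} f - (1/6) * (f a + 4 * f ((a + b) / 2) + f b) = (J1 + J2) / h"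
  proof -
    have "H1 m - H1 a = h^2/24 * f' ((a+b)/2) - h/3 * f ((a+b)/2) - h/6 * f a"
      unfolding H1_def P1_def m_def by (rule hval1[OF h bh])
    moreover have "H2 b - H2 m = -(h^2)/24 * f' ((a+b)/2) - h/3 * f ((a+b)/2) - h/6 * f b"
      unfolding H2_def P2_def m_def by (rule hval2[OF h bh])
    ultimately show ?thesis unfolding fint J1_def J2_def
      using hval3[OF h bh, of "integral {a..m} f" "integral {m..b} f" f "f'"] by simp
  qed
  define X1 where "X1 = (6 * ln 2 - 4 * ln 3 + 7/24) * A + 5 * B / 24"
  define X2 where "X2 = (6 * ln 2 - 4 * ln 3 + 7/24) * B + 5 * A / 24"
  define k where "k = h^3/6"
  have k: "k > 0" using h by (simp add: k_def)
  have gpt: "\<bar>f'' x\<bar> powr q \<le> A * h/(b-x) + B * h/(x-a)" if "a < x" "x < b" for x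
    using GL_pt[OF gl aI bI that] by (simp add: A_def B_def h_def)
  define G1 where "G1 x = A * ((x-a)*\<bar>3*(x-a)-h\<bar>/6 * h/(b-x)) + B * (h*\<bar>3*(x-a)-h\<bar>/6)" for x
  have hG1: "(G1 has_integral (A * (h^3*(6 * ln 2 - 4 * ln 3 + 7/24)/6) + B * (5*h^3/144))) {a..m}"
    unfolding G1_def m_def
    by (intro has_integral_add has_integral_mult_right int_C1[OF h bh] int_D1[OF h bh])
  have G1nn: "0 \<le> G1 x" if "x \<in> {a..m}" for x
    using that am A0 B0 h unfolding G1_def by (intro add_nonneg_nonneg mult_nonneg_nonneg divide_nonneg_nonneg) auto
  have b1: "\<bar>J1\<bar> \<le> (h^3/162) powr (1 - 1/q) * (A * (h^3*(6 * ln 2 - 4 * ln 3 + 7/24)/6) + B * (5*h^3/144)) powr (1/q)"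
  proof (rule half_bound[OF q j1 _ hG1, where w="\<lambda>x. (x-a)*\<bar>3*(x-a)-h\<bar>/6" and F=f''])
    show "((\<lambda>x. (x-a)*\<bar>3*(x-a)-h\<bar>/6) has_integral h^3/162) {a..m}"
      unfolding m_def by (rule int_W1[OF h bh])
    show "h^3/162 > 0" using h by simp
    fix x assume x: "x \<in> {a..m}"
    show "\<bar>P1 x * f'' x\<bar> \<le> (x-a)*\<bar>3*(x-a)-h\<bar>/6 * \<bar>f'' x\<bar>"
      using x by (simp add: P1_def abs_mult)
    show "0 \<le> (x-a)*\<bar>3*(x-a)-h\<bar>/6" using x by simp
    show "(x-a)*\<bar>3*(x-a)-h\<bar>/6 * \<bar>f'' x\<bar> powr q \<le> G1 x"
    proof (cases "x = a")
      case True then show ?thesis using G1nn[OF x] by simp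
    next
      case False
      hence xa: "a < x" "x < b" using x am by auto
      have "(x-a)*\<bar>3*(x-a)-h\<bar>/6 * \<bar>f'' x\<bar> powr q \<le> (x-a)*\<bar>3*(x-a)-h\<bar>/6 * (A * h/(b-x) + B * h/(x-a))"
        using gpt[OF xa] xa by (intro mult_left_mono) auto
      also have "\<dots> = G1 x" 
      proof -
        have ne: "x - a \<noteq> 0" using xa by simp
        show ?thesis unfolding G1_def dist_aux cancel_aux[OF ne] ..
      qed
      finally show ?thesis .
    qed
  qed
  have X1: "X1 \<ge> 0"
  proof -
    have "0 \<le> A * (h^3*(6 * ln 2 - 4 * ln 3 + 7/24)/6) + B * (5*h^3/144)"
      using hG1 G1nn by (rule has_integral_nonneg)
    also have "\<dots> = k * X1" by (simp add: k_def X1_def field_simps)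
    finally show ?thesis using k by (simp add: zero_le_mult_iff)
  qed
  have b1': "\<bar>J1\<bar> \<le> k * ((1/27) powr (1-1/q) * X1 powr (1/q))"
  proof -
    have "h^3/162 = k/27" "A * (h^3*(6 * ln 2 - 4 * ln 3 + 7/24)/6) + B * (5*h^3/144) = k * X1"
      by (simp_all add: k_def X1_def field_simps)
    then show ?thesis using b1 rescale[OF k X1] by simp
  qed
  define G2 where "G2 x = A * (h*\<bar>3*(b-x)-h\<bar>/6) + B * ((b-x)*\<bar>3*(b-x)-h\<bar>/6 * h/(x-a))" for x
  have hG2: "(G2 has_integral (A * (5*h^3/144) + B * (h^3*(6 * ln 2 - 4 * ln 3 + 7/24)/6))) {m..b}"
    unfolding G2_def m_def
    by (intro has_integral_add has_integral_mult_right int_C2[OF h bh] int_D2[OF h bh])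
  have G2nn: "0 \<le> G2 x" if "x \<in> {m..b}" for x
    using that am A0 B0 h unfolding G2_def by (intro add_nonneg_nonneg mult_nonneg_nonneg divide_nonneg_nonneg) auto
  have b2: "\<bar>J2\<bar> \<le> (h^3/162) powr (1 - 1/q) * (A * (5*h^3/144) + B * (h^3*(6 * ln 2 - 4 * ln 3 + 7/24)/6)) powr (1/q)"
  proof (rule half_bound[OF q j2 _ hG2, where w="\<lambda>x. (b-x)*\<bar>3*(b-x)-h\<bar>/6" and F=f''])
    show "((\<lambda>x. (b-x)*\<bar>3*(b-x)-h\<bar>/6) has_integral h^3/162) {m..b}"
      unfolding m_def by (rule int_W2[OF h bh])
    show "h^3/162 > 0" using h by simp
    fix x assume x: "x \<in> {m..b}"
    show "\<bar>P2 x * f'' x\<bar> \<le> (b-x)*\<bar>3*(b-x)-h\<bar>/6 * \<bar>f'' x\<bar>"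
      using x by (simp add: P2_def abs_mult)
    show "0 \<le> (b-x)*\<bar>3*(b-x)-h\<bar>/6" using x by simp
    show "(b-x)*\<bar>3*(b-x)-h\<bar>/6 * \<bar>f'' x\<bar> powr q \<le> G2 x"
    proof (cases "x = b")
      case True then show ?thesis using G2nn[OF x] by simp
    next
      case False
      hence xa: "a < x" "x < b" using x am by auto
      have "(b-x)*\<bar>3*(b-x)-h\<bar>/6 * \<bar>f'' x\<bar> powr q \<le> (b-x)*\<bar>3*(b-x)-h\<bar>/6 * (A * h/(b-x) + B * h/(x-a))"
        using gpt[OF xa] xa by (intro mult_left_mono) auto
      also have "\<dots> = G2 x" 
      proof -
        have ne: "b - x \<noteq> 0" using xa by simp
        show ?thesis unfolding G2_def dist_aux cancel_aux[OF ne] ..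
      qed
      finally show ?thesis .
    qed
  qed
  have X2: "X2 \<ge> 0"
  proof -
    have "0 \<le> A * (5*h^3/144) + B * (h^3*(6 * ln 2 - 4 * ln 3 + 7/24)/6)"
      using hG2 G2nn by (rule has_integral_nonneg)
    also have "\<dots> = k * X2" by (simp add: k_def X2_def field_simps)
    finally show ?thesis using k by (simp add: zero_le_mult_iff)
  qed
  have b2': "\<bar>J2\<bar> \<le> k * ((1/27) powr (1-1/q) * X2 powr (1/q))"
  proof -
    have "h^3/162 = k/27" "A * (5*h^3/144) + B * (h^3*(6 * ln 2 - 4 * ln 3 + 7/24)/6) = k * X2"
      by (simp_all add: k_def X2_def field_simps)
    then show ?thesis using b2 rescale[OF k X2] by simp
  qed
  have "\<bar>(J1 + J2) / h\<bar> \<le> (\<bar>J1\<bar> + \<bar>J2\<bar>) / h"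
    using h by (simp add: abs_triangle_ineq divide_right_mono)
  also have "\<dots> \<le> (k * ((1/27) powr (1-1/q) * X1 powr (1/q)) + k * ((1/27) powr (1-1/q) * X2 powr (1/q))) / h"
    using b1' b2' h by (intro divide_right_mono add_mono) auto
  also have "\<dots> = (b - a)^2 / 6 * (1/27) powr (1 - 1/q) * (X1 powr (1/q) + X2 powr (1/q))"
    using h by (simp add: k_def h_def field_simps power3_eq_cube power2_eq_square)
  finally show ?thesis unfolding ident X1_def X2_def A_def B_def .
qed

thm_deps theorem2

end
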